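(* Let $q$ be a prime power, let $\gamma$ be a primitive element of $\mathbb{F}_{q^2}$, and for any integer $a$ let $h_a(x)\in\mathbb{F}_q[x]$ be the minimal polynomial of $\gamma^{-a}$ over $\mathbb{F}_q$. For integers $e_1,e_2$ let $\mathcal{C}_{((q+1)e_1,e_2)}$ be the cyclic code of length $q^2-1$ over $\mathbb{F}_q$ with parity-check polynomial $h_{(q+1)e_1}(x)h_{e_2}(x)$. Let $\mathcal{N}$ be the number of distinct cyclic codes of the form $\mathcal{C}_{((q+1)e_1,e_2)}$, of length $q^2-1$ and dimension $3$, where $e_1,e_2$ range over all integers with $\gcd(q-1,2e_1-e_2)=1$ and $\gcd(q+1,e_2)=1$. Then $$\mathcal{N}=\frac{\phi(q^2-1)(q-1)}{2},$$ where $\phi$ is Euler's totient function. *)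

theory Defs
  imports "HOL-Computational_Algebra.Polynomial" "HOL-Number_Theory.Totient" "HOL-Library.Cardinality"
begin

text \<open>The big field F_{q^2} is a finite field type 'a with q^2 elements;
  F_q is realised as its unique subfield of order q, namely the set of
  elements fixed by x |-> x^q.\<close>
definition subfield_Fq :: "nat \<Rightarrow> 'a::field set" where
  "subfield_Fq q = {x. x ^ q = x}"

definition poly_over :: "'a::field set \<Rightarrow> 'a poly \<Rightarrow> bool" where
  "poly_over K p \<longleftrightarrow> (\<forall>i. coeff p i \<in> K)"

definition minpoly_over :: "'a::field set \<Rightarrow> 'a \<Rightarrow> 'a poly" where
  "minpoly_over K \<alpha> = (THE p. poly_over K p \<and> lead_coeff p = 1 \<and> poly p \<alpha> = 0 \<and>
     (\<forall>r. poly_over K r \<and> r \<noteq> 0 \<and> poly r \<alpha> = 0 \<longrightarrow> degree p \<le> degree r))"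

text \<open>Cyclic code of length n over K with parity-check polynomial h: codewords
  are identified with polynomials of degree < n over K; the code is the set of
  multiples of the generator polynomial g = (x^n - 1) / h.\<close>
definition cyclic_code_check :: "'a::field set \<Rightarrow> nat \<Rightarrow> 'a poly \<Rightarrow> 'a poly set" where
  "cyclic_code_check K n h =
     {c. poly_over K c \<and> degree c < n \<and> ((monom 1 n - 1) div h) dvd c}"

definition K_span :: "'a::field set \<Rightarrow> 'a poly set \<Rightarrow> 'a poly set" where
  "K_span K B = {(\<Sum>b\<in>B. smult (c b) b) | c. \<forall>b\<in>B. c b \<in> K}"

definition K_independent :: "'a::field set \<Rightarrow> 'a poly set \<Rightarrow> bool" where
  "K_independent K B \<longleftrightarrow>
     (\<forall>c. (\<forall>b\<in>B. c b \<in> K) \<and> (\<Sum>b\<in>B. smult (c b) b) = 0 \<longrightarrow> (\<forall>b\<in>B. c b = 0))"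

definition K_dim_eq :: "'a::field set \<Rightarrow> 'a poly set \<Rightarrow> nat \<Rightarrow> bool" where
  "K_dim_eq K C k \<longleftrightarrow>
     (\<exists>B. finite B \<and> card B = k \<and> B \<subseteq> C \<and> K_independent K B \<and> K_span K B = C)"

definition primitive_element :: "'a::{finite,field} \<Rightarrow> bool" where
  "primitive_element \<gamma> \<longleftrightarrow> (\<forall>x. x \<noteq> 0 \<longrightarrow> (\<exists>k::nat. x = \<gamma> ^ k))"

end

theory Submission
  imports Defs
begin

locale ffsetting =
  fixes q :: nat and \<gamma> :: "'a::{finite,field}" and p k :: nat
  assumes p_prime: "prime p" and k_pos: "k > 0" and q_def: "q = p ^ k"
    and cardA: "CARD('a) = q ^ 2"
    and prim: "primitive_element \<gamma>"
begin

definition "N = q ^ 2 - 1"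
abbreviation "K \<equiv> subfield_Fq q :: 'a set"
definition frob :: "'a \<Rightarrow> 'a" where "frob x = x ^ q"

lemma q_ge2: "q \<ge> 2"
proof -
  have "p \<ge> 2" using p_prime by (simp add: prime_ge_2_nat)
  moreover have "p \<le> p ^ k" using k_pos \<open>p \<ge> 2\<close> by (simp add: self_le_power)
  ultimately show ?thesis using q_def by simp
qed

lemma N_eq: "N = (q - 1) * (q + 1)"
  unfolding N_def using q_ge2 by (simp add: power2_eq_square algebra_simps)

lemma N_ge3: "N \<ge> 3"
proof -
  have "q ^ 2 \<ge> 4" using q_ge2 power_mono[of 2 q 2] by simp
  thus ?thesis unfolding N_def by simp
qed

lemma CHAR_eq: "CHAR('a) = p"
proof -
  have fin: "finite (UNIV :: 'a set)" by simp
  have pr: "prime CHAR('a)" using prime_CHAR_semidom finite_imp_CHAR_pos[OF fin] by blast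
  have "(\<Sum>x\<in>(UNIV::'a set). x + 1) = (\<Sum>x\<in>UNIV. x)"
    by (rule sum.reindex_bij_witness[of _ "\<lambda>x. x - 1" "\<lambda>x. x + 1"]) auto
  hence "(\<Sum>x\<in>(UNIV::'a set). x) + of_nat (card (UNIV::'a set)) = (\<Sum>x\<in>UNIV. x)"
    by (simp add: sum.distrib)
  hence "of_nat (card (UNIV::'a set)) = (0::'a)" by simp
  hence "CHAR('a) dvd card (UNIV::'a set)" by (simp add: of_nat_eq_0_iff_char_dvd)
  hence "CHAR('a) dvd p ^ (2 * k)" using cardA q_def
    by (simp add: power_mult mult.commute)
  hence "CHAR('a) dvd p" using pr prime_dvd_power by blast
  thus ?thesis using pr p_prime by (simp add: primes_dvd_imp_eq)
qed

lemma frob_add: "frob ((x::'a) + y) = frob x + frob y"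
  unfolding frob_def using CHAR_eq p_prime q_def by (intro freshmans_dream') auto

lemma frob_0 [simp]: "frob 0 = 0" using q_ge2 by (simp add: frob_def)
lemma frob_1 [simp]: "frob 1 = 1" by (simp add: frob_def)
lemma frob_mult: "frob ((x::'a) * y) = frob x * frob y" by (simp add: frob_def power_mult_distrib)
lemma frob_uminus: "frob (- (x::'a)) = - frob x"
proof -
  have "frob x + frob (-x) = 0" using frob_add[of x "-x"] by simp
  thus ?thesis by (simp add: eq_neg_iff_add_eq_0 add.commute)
qed
lemma frob_diff: "frob ((x::'a) - y) = frob x - frob y"
  using frob_add[of x "-y"] frob_uminus[of y] by simp
lemma frob_sum: "frob (sum (f::_\<Rightarrow>'a) A) = sum (\<lambda>i. frob (f i)) A"
  by (induction A rule: infinite_finite_induct) (auto simp: frob_add)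
lemma frob_inverse: "frob (inverse (x::'a)) = inverse (frob x)"
  by (simp add: frob_def power_inverse)
lemma frob_divide: "frob ((x::'a) / y) = frob x / frob y"
  by (simp add: frob_def power_divide)

lemma power_card_same: "(x::'a) ^ (q ^ 2) = x"
proof -
  have c: "card (UNIV :: 'a set) = q ^ 2" using cardA by simp
  have pos: "card (UNIV :: 'a set) > 0" by (simp add: finite_UNIV_card_ge_0)
  show ?thesis
  proof (cases "x = 0")
    case False
    have "x * (\<Prod>y\<in>UNIV-{0}. x * y) = x * x ^ (card (UNIV :: 'a set) - 1) * \<Prod>(UNIV-{0})"
      by (simp add: prod.distrib mult_ac)
    also have "x * x ^ (card (UNIV :: 'a set) - 1) = x ^ Suc (card (UNIV :: 'a set) - 1)"
      by (subst power_Suc) auto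
    also have "Suc (card (UNIV :: 'a set) - 1) = card (UNIV :: 'a set)"
      using pos by simp
    also have "(\<Prod>y\<in>UNIV-{0}. x * y) = (\<Prod>y\<in>UNIV-{0}. y)"
      by (rule prod.reindex_bij_witness[of _ "\<lambda>y. y / x" "\<lambda>y. x * y"]) (use False in auto)
    finally show ?thesis using c by simp
  qed (use pos c in auto)
qed

lemma frob_frob [simp]: "frob (frob (x::'a)) = x"
  unfolding frob_def by (metis power_card_same power_mult power2_eq_square)

lemma inK_iff: "(x::'a) \<in> K \<longleftrightarrow> frob x = x" by (simp add: subfield_Fq_def frob_def)

lemma nonzero_pow_N: "(x::'a) \<noteq> 0 \<Longrightarrow> x ^ N = 1"
proof -
  assume x: "x \<noteq> 0"
  have "q^2 = Suc N" using N_ge3 unfolding N_def by simp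
  hence "x * x ^ N = x ^ (q^2)" by simp
  also have "\<dots> = x * 1" by (simp add: power_card_same)
  finally show ?thesis using x by simp
qed

lemma gamma_nz: "\<gamma> \<noteq> 0"
proof
  assume g: "\<gamma> = 0"
  have "UNIV \<subseteq> {0, 1 :: 'a}"
  proof
    fix x :: 'a
    show "x \<in> {0,1}"
    proof (cases "x = 0")
      case False
      then obtain j where "x = \<gamma> ^ j" using prim unfolding primitive_element_def by blast
      thus ?thesis using g by (cases j) auto
    qed simp
  qed
  hence "card (UNIV :: 'a set) \<le> card {0,1::'a}" by (intro card_mono) auto
  hence "card (UNIV :: 'a set) \<le> 2" by simp
  moreover have "q ^ 2 \<ge> 4" using q_ge2 power_mono[of 2 q 2] by simp
  ultimately show False using cardA by simp
qed

lemma gamma_pow_N: "\<gamma> ^ N = 1" using nonzero_pow_N gamma_nz by blast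

lemma gamma_pow_mod: "\<gamma> ^ i = \<gamma> ^ (i mod N)"
proof -
  have "\<gamma> ^ i = \<gamma> ^ (N * (i div N) + i mod N)" by simp
  also have "\<dots> = \<gamma> ^ (i mod N)" by (simp only: power_add power_mult gamma_pow_N power_one mult_1_left)
  finally show ?thesis .
qed

lemma gamma_inj: "inj_on (\<lambda>i. \<gamma> ^ i) {..<N}"
proof -
  have N0: "N > 0" using N_ge3 by simp
  have "UNIV - {0} \<subseteq> (\<lambda>i. \<gamma> ^ i) ` {..<N}"
  proof
    fix x :: 'a assume "x \<in> UNIV - {0}"
    then obtain j where "x = \<gamma> ^ j" using prim unfolding primitive_element_def by blast
    hence "x = \<gamma> ^ (j mod N)" using gamma_pow_mod by simp
    moreover have "j mod N < N" using N0 by simp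
    ultimately show "x \<in> (\<lambda>i. \<gamma> ^ i) ` {..<N}" by blast
  qed
  hence "card (UNIV - {0::'a}) \<le> card ((\<lambda>i. \<gamma> ^ i) ` {..<N})" by (intro card_mono) auto
  moreover have "card (UNIV - {0::'a}) = N" using cardA unfolding N_def by (simp add: card_Diff_singleton)
  moreover have "card ((\<lambda>i. \<gamma> ^ i) ` {..<N}) \<le> card {..<N}" by (rule card_image_le) simp
  ultimately have "card ((\<lambda>i. \<gamma> ^ i) ` {..<N}) = card {..<N}" by simp
  thus ?thesis by (intro eq_card_imp_inj_on) simp_all
qed

lemma gamma_eq_iff: "\<gamma> ^ i = \<gamma> ^ j \<longleftrightarrow> i mod N = j mod N"
proof
  assume "\<gamma> ^ i = \<gamma> ^ j"
  hence "\<gamma> ^ (i mod N) = \<gamma> ^ (j mod N)" using gamma_pow_mod by metis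
  moreover have "i mod N < N" "j mod N < N" using N_ge3 by auto
  ultimately show "i mod N = j mod N" using gamma_inj by (auto dest: inj_onD)
next
  assume "i mod N = j mod N" thus "\<gamma> ^ i = \<gamma> ^ j" using gamma_pow_mod by metis
qed

lemma gamma_powi: assumes "int N dvd (z - int m)" shows "\<gamma> powi z = \<gamma> ^ m"
proof -
  obtain t where t: "z - int m = int N * t" using assms by blast
  have "z = int m + int N * t" using t by simp
  hence "\<gamma> powi z = \<gamma> powi (int m) * (\<gamma> powi (int N)) powi t"
    using gamma_nz by (simp add: power_int_add power_int_mult)
  also have "\<dots> = \<gamma> ^ m" by (simp add: gamma_pow_N)
  finally show ?thesis .
qed

lemma gamma_qp1_inK: "\<gamma> ^ ((q+1) * a) \<in> K"
proof -
  have "q ^ 2 \<ge> 4" using q_ge2 power_mono[of 2 q 2] by simp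
  hence e1: "N + (q+1) = q^2 + q" unfolding N_def by simp
  have e2: "(q+1)*q = q^2 + q" by (simp add: power2_eq_square algebra_simps)
  have "(q + 1) * a * q = ((q+1)*q) * a" by (simp add: algebra_simps)
  also have "\<dots> = (N + (q+1)) * a" by (simp only: e2 e1[symmetric])
  finally have eq: "(q + 1) * a * q = N * a + (q+1) * a" by (simp add: algebra_simps)
  have "frob (\<gamma> ^ ((q+1) * a)) = \<gamma> ^ ((q+1) * a * q)" unfolding frob_def by (simp only: power_mult)
  also have "\<dots> = \<gamma> ^ (N * a + (q+1) * a)" by (simp only: eq)
  also have "\<dots> = \<gamma> ^ ((q+1) * a)" by (simp only: power_add power_mult gamma_pow_N power_one mult_1_left)
  finally show ?thesis by (simp add: inK_iff)
qed

lemma gamma_notinK: assumes "coprime c N" shows "\<gamma> ^ (c + (q+1) * a) \<notin> K"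
proof
  assume inK: "\<gamma> ^ (c + (q+1) * a) \<in> K"
  have "\<gamma> ^ c = \<gamma> ^ (c + (q+1) * a) / \<gamma> ^ ((q+1) * a)" using gamma_nz by (simp add: power_add)
  hence "\<gamma> ^ c \<in> K" using inK gamma_qp1_inK by (simp add: inK_iff frob_divide)
  hence "\<gamma> ^ (c * q) = \<gamma> ^ c" by (simp add: inK_iff frob_def power_mult)
  hence "(c * q) mod N = c mod N" by (simp add: gamma_eq_iff)
  hence "N dvd (c * q - c)" using q_ge2 by (simp add: mod_eq_dvd_iff_nat)
  hence "(q - 1) * (q + 1) dvd c * (q - 1)" by (simp add: N_eq right_diff_distrib')
  hence "(q - 1) * (q + 1) dvd (q - 1) * c" by (simp add: mult.commute)
  hence "(q + 1) dvd c" using q_ge2 by (subst (asm) nat_mult_dvd_cancel_disj) simp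
  moreover have "(q + 1) dvd N" unfolding N_eq by (rule dvd_triv_right)
  ultimately have "is_unit (q+1)" using coprime_common_divisor[OF assms] by blast
  thus False using q_ge2 by simp
qed

abbreviation "mf \<equiv> map_poly frob"

lemma coeff_mf [simp]: "coeff (mf pp) n = frob (coeff pp n)"
  by (simp add: coeff_map_poly)

lemma over_iff: "poly_over K pp \<longleftrightarrow> mf pp = pp"
  by (auto simp: poly_over_def poly_eq_iff inK_iff)

lemma mf_mult: "mf (pp * r) = mf pp * mf r"
  by (simp add: poly_eq_iff coeff_mult frob_sum frob_mult)
lemma mf_add: "mf (pp + r) = mf pp + mf r"
  by (simp add: poly_eq_iff frob_add)
lemma mf_diff: "mf (pp - r) = mf pp - mf r"
  by (simp add: poly_eq_iff frob_diff)
lemma mf_smult: "mf (smult c pp) = smult (frob c) (mf pp)"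
  by (simp add: poly_eq_iff frob_mult)
lemma mf_monom: "mf (monom c n) = monom (frob c) n"
  by (simp add: poly_eq_iff coeff_monom)
lemma mf_pCons: "mf (pCons c pp) = pCons (frob c) (mf pp)"
  by (simp add: poly_eq_iff coeff_pCons split: nat.split)
lemma mf_1: "mf 1 = 1" by (simp add: poly_eq_iff coeff_1)

lemma K_diff: "x \<in> K \<Longrightarrow> y \<in> K \<Longrightarrow> x - y \<in> K" by (simp add: inK_iff frob_diff)

lemma minpoly_eqI:
  assumes over: "poly_over K m" and mon: "lead_coeff m = 1" and root: "poly m \<alpha> = 0"
    and mini: "\<And>r. poly_over K r \<Longrightarrow> r \<noteq> 0 \<Longrightarrow> poly r \<alpha> = 0 \<Longrightarrow> degree m \<le> degree r"
  shows "minpoly_over K \<alpha> = m"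
  unfolding minpoly_over_def
proof (rule the_equality)
  show "poly_over K m \<and> lead_coeff m = 1 \<and> poly m \<alpha> = 0 \<and>
     (\<forall>r. poly_over K r \<and> r \<noteq> 0 \<and> poly r \<alpha> = 0 \<longrightarrow> degree m \<le> degree r)"
    using assms by blast
next
  fix pp assume P: "poly_over K pp \<and> lead_coeff pp = 1 \<and> poly pp \<alpha> = 0 \<and>
     (\<forall>r. poly_over K r \<and> r \<noteq> 0 \<and> poly r \<alpha> = 0 \<longrightarrow> degree pp \<le> degree r)"
  have m0: "m \<noteq> 0" using mon by auto
  have p0: "pp \<noteq> 0" using P by auto
  have d1: "degree pp \<le> degree m" using P over m0 root by blast
  have d2: "degree m \<le> degree pp" using mini P p0 by blast
  have deq: "degree pp = degree m" using d1 d2 by simp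
  show "pp = m"
  proof (rule ccontr)
    assume ne: "pp \<noteq> m"
    define r where "r = pp - m"
    have r0: "r \<noteq> 0" using ne by (simp add: r_def)
    have overr: "poly_over K r" using P over by (simp add: over_iff r_def mf_diff)
    have rootr: "poly r \<alpha> = 0" using P root by (simp add: r_def)
    have "degree r \<le> degree m" unfolding r_def using deq by (simp add: degree_diff_le)
    moreover have "coeff r (degree m) = 0" using P mon deq by (simp add: r_def)
    ultimately have "degree r < degree m" using r0
      by (metis le_neq_implies_less leading_coeff_0_iff)
    with mini[OF overr r0 rootr] show False by simp
  qed
qed

lemma deg_le1: assumes "degree (r::'a poly) \<le> 1" shows "r = [:coeff r 0, coeff r 1:]"
  using assms by (auto simp: poly_eq_iff coeff_pCons coeff_eq_0 split: nat.split)

lemma minpoly_lin: assumes "x \<in> K" shows "minpoly_over K x = [:-x, 1:]"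
proof (rule minpoly_eqI)
  show "poly_over K [:-x, 1:]" using assms by (simp add: over_iff mf_pCons frob_uminus inK_iff)
  show "lead_coeff [:-x, 1:] = 1" by simp
  show "poly [:-x, 1:] x = 0" by simp
  fix r :: "'a poly" assume r0: "r \<noteq> 0" and rt: "poly r x = 0"
  show "degree [:-x, 1:] \<le> degree r"
  proof (rule ccontr)
    assume "\<not> ?thesis"
    hence "degree r \<le> 1" by simp
    hence req: "r = [:coeff r 0, coeff r 1:]" by (rule deg_le1)
    define a b where "a = coeff r 0" and "b = coeff r 1"
    have req': "r = [:a, b:]" using req by (simp add: a_def b_def)
    have "b = 0" using \<open>\<not> degree [:-x, 1:] \<le> degree r\<close> req' by (cases "b = 0") auto
    thus False using rt r0 req' by simp
  qed
qed

definition mp :: "'a \<Rightarrow> 'a poly" where "mp y = [:y * frob y, -(y + frob y), 1:]"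

lemma mp_factor: "mp y = [:-y, 1:] * [:-frob y, 1:]"
  by (simp add: mp_def algebra_simps)

lemma mp_frob: "mp (frob y) = mp y"
  by (simp add: mp_def algebra_simps)

lemma degree_mp [simp]: "degree (mp y) = 2" by (simp add: mp_def)
lemma lead_mp [simp]: "lead_coeff (mp y) = 1" by (simp add: mp_def)
lemma mp_over: "poly_over K (mp y)"
  by (simp add: over_iff mp_def mf_pCons frob_uminus frob_add frob_mult frob_diff algebra_simps)

lemma minpoly_quad: assumes "y \<notin> K" shows "minpoly_over K y = mp y"
proof (rule minpoly_eqI)
  show "poly_over K (mp y)" by (rule mp_over)
  show "lead_coeff (mp y) = 1" by (rule lead_mp)
  show "poly (mp y) y = 0" by (simp add: mp_factor)
  fix r :: "'a poly" assume ov: "poly_over K r" and r0: "r \<noteq> 0" and rt: "poly r y = 0"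
  show "degree (mp y) \<le> degree r"
  proof (rule ccontr)
    assume "\<not> ?thesis"
    hence "degree r \<le> 1" by simp
    hence req: "r = [:coeff r 0, coeff r 1:]" by (rule deg_le1)
    have a: "coeff r 0 \<in> K" "coeff r 1 \<in> K" using ov by (auto simp: poly_over_def)
    define a0 a1 where "a0 = coeff r 0" and "a1 = coeff r 1"
    have req': "r = [:a0, a1:]" using req by (simp add: a0_def a1_def)
    have "a0 + y * a1 = 0" using rt req' by simp
    hence ev: "coeff r 0 + y * coeff r 1 = 0" by (simp add: a0_def a1_def)
    show False
    proof (cases "coeff r 1 = 0")
      case True
      then have "coeff r 0 = 0" using ev by simp
      then have "r = 0" using req True by simp
      then show False using r0 by simp
    next
      case False
      then have "y = - coeff r 0 / coeff r 1" using ev by (simp add: field_simps eq_neg_iff_add_eq_0)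
      moreover have "- coeff r 0 / coeff r 1 \<in> K" using a by (simp add: inK_iff frob_divide frob_uminus)
      ultimately show False using assms by simp
    qed
  qed
qed

definition "fN = (monom 1 N - 1 :: 'a poly)"
definition "hpol x y = [:-x, 1:] * mp y"
definition "gpol x y = fN div hpol x y"

lemma degree_fN: "degree fN = N"
proof -
  have e: "fN = monom 1 N + (- 1)" by (simp add: fN_def)
  have "degree (monom (1::'a) N + (-1)) = N"
    by (subst degree_add_eq_left) (use N_ge3 in \<open>simp_all add: degree_monom_eq\<close>)
  thus ?thesis using e by simp
qed

lemma lead_fN: "lead_coeff fN = 1"
proof -
  have "lead_coeff fN = coeff fN N" by (simp only: degree_fN)
  also have "\<dots> = 1" using N_ge3 by (simp add: fN_def coeff_monom coeff_1)
  finally show ?thesis .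
qed

lemma fN_over: "poly_over K fN"
  by (simp add: over_iff fN_def mf_diff mf_monom mf_1)

lemma poly_fN: "poly fN z = z ^ N - 1" by (simp add: fN_def poly_monom)

lemma fN_root: "z \<noteq> 0 \<Longrightarrow> poly fN z = 0" by (simp add: poly_fN nonzero_pow_N)

lemma zero_inK: "0 \<in> K" by (simp add: inK_iff)

lemma frob_notinK: "y \<notin> K \<Longrightarrow> frob y \<notin> K" by (simp add: inK_iff)
lemma frob_ne: "y \<notin> K \<Longrightarrow> frob y \<noteq> y" by (simp add: inK_iff)

lemma poly_hpol: "poly (hpol x y) z = 0 \<longleftrightarrow> z = x \<or> z = y \<or> z = frob y"
proof -
  have "poly (hpol x y) z = poly [:-x,1:] z * (poly [:-y,1:] z * poly [:-frob y,1:] z)"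
    by (simp only: hpol_def mp_factor poly_mult)
  thus ?thesis by simp
qed

lemma degree_hpol [simp]: "degree (hpol x y) = 3"
proof -
  have "degree (hpol x y) = degree [:-x, 1:] + degree (mp y)" unfolding hpol_def
    by (rule degree_mult_eq) (auto simp: mp_def)
  thus ?thesis by simp
qed

lemma lead_hpol [simp]: "lead_coeff (hpol x y) = 1"
  unfolding hpol_def lead_coeff_mult by (simp only: lead_mp) simp

lemma hpol_nz: "hpol x y \<noteq> 0" using lead_hpol[of x y] by auto

lemma hpol_over: assumes "x \<in> K" shows "poly_over K (hpol x y)"
proof -
  have a: "mf [:-x, 1:] = [:-x, 1:]" using assms by (simp add: mf_pCons frob_uminus inK_iff)
  have b: "mf (mp y) = mp y" using mp_over[of y] by (simp add: over_iff)
  show ?thesis unfolding over_iff hpol_def mf_mult a b ..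
qed

lemma hpol_frob: "hpol x (frob y) = hpol x y" by (simp add: hpol_def mp_frob)

lemma hpol_dvd:
  assumes x: "x \<in> K" "x \<noteq> 0" and y: "y \<notin> K"
  shows "hpol x y dvd fN"
proof -
  have y0: "y \<noteq> 0" using y zero_inK by auto
  have fy0: "frob y \<noteq> 0" using frob_notinK[OF y] zero_inK by auto
  have xy: "y \<noteq> x" using x y by auto
  have xfy: "frob y \<noteq> x" using x frob_notinK[OF y] by auto
  have yfy: "frob y \<noteq> y" using frob_ne[OF y] .
  have "[:-x, 1:] dvd fN" using fN_root[OF x(2)] by (simp add: poly_eq_0_iff_dvd)
  then obtain f1 where f1: "fN = [:-x, 1:] * f1" by blast
  have "poly f1 y = 0" using fN_root[OF y0] xy by (simp add: f1)
  then obtain f2 where f2: "f1 = [:-y, 1:] * f2" by (auto simp: poly_eq_0_iff_dvd)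
  have "poly f2 (frob y) = 0" using fN_root[OF fy0] xfy yfy by (simp add: f1 f2)
  then obtain f3 where f3: "f2 = [:-frob y, 1:] * f3" by (auto simp: poly_eq_0_iff_dvd)
  have "fN = hpol x y * f3" unfolding f1 f2 f3 hpol_def mp_factor by (simp only: mult.assoc)
  thus ?thesis by simp
qed

context
  fixes x y assumes x: "x \<in> K" "x \<noteq> 0" and y: "y \<notin> K"
begin

lemma g_mult: "gpol x y * hpol x y = fN"
  unfolding gpol_def using hpol_dvd[OF x y] by simp

lemma g_nz: "gpol x y \<noteq> 0"
proof
  assume "gpol x y = 0"
  hence "fN = 0" using g_mult by simp
  thus False using degree_fN N_ge3 by simp
qed

lemma degree_g: "degree (gpol x y) = N - 3"
proof -
  have "degree fN = degree (gpol x y) + degree (hpol x y)" unfolding g_mult[symmetric]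
    by (rule degree_mult_eq) (use g_nz hpol_nz in auto)
  thus ?thesis using degree_fN by simp
qed

lemma lead_g: "lead_coeff (gpol x y) = 1"
proof -
  have "lead_coeff fN = lead_coeff (gpol x y) * lead_coeff (hpol x y)"
    unfolding g_mult[symmetric] by (rule lead_coeff_mult)
  thus ?thesis using lead_fN by (simp only: lead_hpol) simp
qed

lemma g_over: "poly_over K (gpol x y)"
proof -
  have "mf (gpol x y) * hpol x y = mf (gpol x y) * mf (hpol x y)"
    using hpol_over[OF x(1)] by (simp add: over_iff)
  also have "\<dots> = mf fN" by (simp add: g_mult[symmetric] mf_mult)
  also have "\<dots> = gpol x y * hpol x y" using fN_over g_mult by (simp add: over_iff)
  finally show ?thesis using hpol_nz by (simp add: over_iff)
qed

end

lemma lin3: "smult a0 g + smult a1 (monom 1 1 * g) + smult a2 (monom 1 2 * g) = [:a0, a1, a2:] * (g :: 'a poly)"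
  by (simp add: monom_Suc numeral_2_eq_2 monom_0 algebra_simps smult_add_right)

lemma degree_le2: "degree [:a0, a1, a2:] \<le> 2"
  by (rule degree_le) (auto simp: coeff_pCons split: nat.split)

lemma deg_le2: assumes "degree (r::'a poly) \<le> 2" shows "r = [:coeff r 0, coeff r 1, coeff r 2:]"
  using assms by (auto simp: poly_eq_iff coeff_pCons coeff_eq_0 numeral_2_eq_2 split: nat.split)

definition "Code x y = cyclic_code_check K N (hpol x y)"

lemma Code_alt: "Code x y = {c. poly_over K c \<and> degree c < N \<and> gpol x y dvd c}"
  by (simp add: Code_def cyclic_code_check_def gpol_def fN_def)

context
  fixes x y assumes x: "x \<in> K" "x \<noteq> 0" and y: "y \<notin> K"
begin

lemma code_mem: "c \<in> Code x y \<longleftrightarrow> (\<exists>a0\<in>K. \<exists>a1\<in>K. \<exists>a2\<in>K. c = [:a0, a1, a2:] * gpol x y)"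
proof
  assume c: "c \<in> Code x y"
  hence ov: "poly_over K c" and dc: "degree c < N" and dv: "gpol x y dvd c" by (auto simp: Code_alt)
  from dv obtain v where v: "c = gpol x y * v" by blast
  have "gpol x y * mf v = gpol x y * v"
    using ov g_over[OF x y] unfolding over_iff by (metis mf_mult v)
  hence vo: "mf v = v" using g_nz[OF x y] by simp
  have "degree v \<le> 2"
  proof (cases "v = 0")
    case False
    have "degree c = degree (gpol x y) + degree v" unfolding v
      by (rule degree_mult_eq) (use g_nz[OF x y] False in auto)
    thus ?thesis using dc degree_g[OF x y] N_ge3 by simp
  qed simp
  hence "v = [:coeff v 0, coeff v 1, coeff v 2:]" by (rule deg_le2)
  moreover have "coeff v i \<in> K" for i using vo by (simp add: over_iff[symmetric] poly_over_def)
  ultimately show "\<exists>a0\<in>K. \<exists>a1\<in>K. \<exists>a2\<in>K. c = [:a0, a1, a2:] * gpol x y"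
    using v by (metis mult.commute)
next
  assume "\<exists>a0\<in>K. \<exists>a1\<in>K. \<exists>a2\<in>K. c = [:a0, a1, a2:] * gpol x y"
  then obtain a0 a1 a2 where a: "a0 \<in> K" "a1 \<in> K" "a2 \<in> K" and c: "c = [:a0, a1, a2:] * gpol x y" by blast
  have "mf [:a0, a1, a2:] = [:a0, a1, a2:]" using a by (simp add: mf_pCons inK_iff)
  hence ov: "poly_over K c" using g_over[OF x y] unfolding c over_iff mf_mult by simp
  have "degree c \<le> degree [:a0, a1, a2:] + degree (gpol x y)" unfolding c by (rule degree_mult_le)
  hence "degree c < N" using degree_le2[of a0 a1 a2] degree_g[OF x y] N_ge3 by simp
  moreover have "gpol x y dvd c" unfolding c by (rule dvd_triv_right)
  ultimately show "c \<in> Code x y" using ov by (simp add: Code_alt)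
qed

lemma g_in_code: "gpol x y \<in> Code x y"
proof -
  have "gpol x y = [:1, 0, 0:] * gpol x y" by simp
  moreover have "(1::'a) \<in> K" "(0::'a) \<in> K" by (simp_all add: inK_iff)
  ultimately show ?thesis by (subst code_mem) blast
qed

lemma code_dim: "K_dim_eq K (Code x y) 3"
proof -
  define g where "g = gpol x y"
  define b1 where "b1 = monom 1 1 * g"
  define b2 where "b2 = monom 1 2 * g"
  have g0: "g \<noteq> 0" using g_nz[OF x y] by (simp add: g_def)
  have dg: "degree g = N - 3" using degree_g[OF x y] by (simp add: g_def)
  have db1: "degree b1 = Suc (N - 3)" unfolding b1_def
    by (subst degree_mult_eq) (use g0 dg in \<open>auto simp: degree_monom_eq\<close>)
  have db2: "degree b2 = Suc (Suc (N - 3))" unfolding b2_def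
    by (subst degree_mult_eq) (use g0 dg in \<open>auto simp: degree_monom_eq\<close>)
  have d: "g \<noteq> b1" "g \<noteq> b2" "b1 \<noteq> b2" using dg db1 db2 by (auto dest!: arg_cong[where f=degree])
  have sumB: "(\<Sum>b\<in>{g, b1, b2}. smult (cf b) b) = [:cf g, cf b1, cf b2:] * g" for cf
  proof -
    have "(\<Sum>b\<in>{g, b1, b2}. smult (cf b) b) = smult (cf g) g + smult (cf b1) b1 + smult (cf b2) b2"
      using d by (simp add: add.assoc)
    also have "\<dots> = [:cf g, cf b1, cf b2:] * g" unfolding b1_def b2_def by (rule lin3)
    finally show ?thesis .
  qed
  have K01: "(1::'a) \<in> K" "(0::'a) \<in> K" by (simp_all add: inK_iff)
  show ?thesis unfolding K_dim_eq_def
  proof (intro exI conjI)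
    show "finite {g, b1, b2}" by simp
    show "card {g, b1, b2} = 3" using d by simp
    show "{g, b1, b2} \<subseteq> Code x y"
    proof -
      have e0: "g = [:1,0,0:] * g"
        by (simp only: lin3[of 1 g 0 0, symmetric] smult_0_left smult_1_left add_0_left add_0_right)
      have e1: "b1 = [:0,1,0:] * g"
        by (simp only: b1_def lin3[of 0 g 1 0, symmetric] smult_0_left smult_1_left add_0_left add_0_right)
      have e2: "b2 = [:0,0,1:] * g"
        by (simp only: b2_def lin3[of 0 g 0 1, symmetric] smult_0_left smult_1_left add_0_left add_0_right)
      have "g \<in> Code x y" "b1 \<in> Code x y" "b2 \<in> Code x y"
        unfolding code_mem using K01 e0 e1 e2 unfolding g_def by blast+
      thus ?thesis by simp
    qed
    show "K_independent K {g, b1, b2}"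
      unfolding K_independent_def
    proof (intro allI impI)
      fix cf assume "(\<forall>b\<in>{g, b1, b2}. cf b \<in> K) \<and> (\<Sum>b\<in>{g, b1, b2}. smult (cf b) b) = 0"
      hence "[:cf g, cf b1, cf b2:] * g = 0" using sumB by simp
      hence "[:cf g, cf b1, cf b2:] = 0" using g0 mult_eq_0_iff by blast
      thus "\<forall>b\<in>{g, b1, b2}. cf b = 0" by simp
    qed
    show "K_span K {g, b1, b2} = Code x y"
    proof
      show "K_span K {g, b1, b2} \<subseteq> Code x y"
      proof
        fix c assume "c \<in> K_span K {g, b1, b2}"
        then obtain cf where cf: "\<forall>b\<in>{g, b1, b2}. cf b \<in> K" and c: "c = (\<Sum>b\<in>{g, b1, b2}. smult (cf b) b)"
          unfolding K_span_def by blast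
        have "c = [:cf g, cf b1, cf b2:] * gpol x y" using c sumB by (simp add: g_def)
        thus "c \<in> Code x y" using cf code_mem by blast
      qed
      show "Code x y \<subseteq> K_span K {g, b1, b2}"
      proof
        fix c assume "c \<in> Code x y"
        then obtain a0 a1 a2 where a: "a0 \<in> K" "a1 \<in> K" "a2 \<in> K" and c: "c = [:a0, a1, a2:] * g"
          unfolding code_mem g_def by blast
        define cf where "cf b = (if b = g then a0 else if b = b1 then a1 else a2)" for b
        have "c = (\<Sum>b\<in>{g, b1, b2}. smult (cf b) b)" using sumB[of cf] d c by (simp add: cf_def)
        moreover have "\<forall>b\<in>{g, b1, b2}. cf b \<in> K" using a by (simp add: cf_def)
        ultimately show "c \<in> K_span K {g, b1, b2}" unfolding K_span_def by blast
      qed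
    qed
  qed
qed

end

lemma code_eq_hpol:
  assumes x: "x \<in> K" "x \<noteq> 0" and y: "y \<notin> K" and x': "x' \<in> K" "x' \<noteq> 0" and y': "y' \<notin> K"
    and eq: "Code x y = Code x' y'"
  shows "hpol x y = hpol x' y'"
proof -
  have "gpol x y \<in> Code x' y'" using g_in_code[OF x y] eq by simp
  hence "gpol x' y' dvd gpol x y" by (simp add: Code_alt)
  then obtain k where k: "gpol x y = gpol x' y' * k" by blast
  have k0: "k \<noteq> 0" using k g_nz[OF x y] by auto
  have "degree (gpol x y) = degree (gpol x' y') + degree k" unfolding k
    by (rule degree_mult_eq) (use g_nz[OF x' y'] k0 in auto)
  hence dk: "degree k = 0" using degree_g[OF x y] degree_g[OF x' y'] by simp
  have "lead_coeff (gpol x y) = lead_coeff (gpol x' y') * lead_coeff k" unfolding k by (rule lead_coeff_mult)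
  hence "coeff k 0 = 1" using lead_g[OF x y] lead_g[OF x' y'] dk by simp
  hence "k = 1" using dk by (metis deg_le1 le_zero_eq one_poly_eq_simps(1) coeff_eq_0 zero_less_one pCons_0_0 le_numeral_extra(1) order.trans  less_one)
  hence gg: "gpol x y = gpol x' y'" using k by simp
  have "gpol x y * hpol x y = gpol x y * hpol x' y'" using g_mult[OF x y] g_mult[OF x' y'] gg by simp
  thus ?thesis using g_nz[OF x y] by simp
qed

lemma hpol_eq_imp:
  assumes x: "x \<in> K" and y: "y \<notin> K" and x': "x' \<in> K" and y': "y' \<notin> K"
    and eq: "hpol x y = hpol x' y'"
  shows "x' = x \<and> (y' = y \<or> y' = frob y)"
proof -
  have "poly (hpol x y) x' = 0" "poly (hpol x y) y' = 0" unfolding eq by (simp_all add: poly_hpol)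
  hence "x' = x \<or> x' = y \<or> x' = frob y" "y' = x \<or> y' = y \<or> y' = frob y" by (simp_all add: poly_hpol)
  thus ?thesis using x y x' y' frob_notinK[OF y] by auto
qed

definition "P = {..<q-1} \<times> totatives N"
definition "emb = (\<lambda>(a::nat, c::nat). (\<gamma> ^ ((q+1)*a), \<gamma> ^ (c + (q+1)*a)))"
definition "T = emb ` P"
definition "Code' = (\<lambda>(x, y). Code x y)"

lemma gamma_pow_nz: "\<gamma> ^ i \<noteq> 0" using gamma_nz by simp

lemma tot_lt: assumes "c \<in> totatives N" shows "c < N" "coprime c N"
proof -
  have "c \<le> N" "coprime c N" using assms by (auto simp: in_totatives_iff)
  moreover have "c \<noteq> N"
  proof
    assume "c = N" with \<open>coprime c N\<close> have "N = 1" by simp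
    thus False using N_ge3 by simp
  qed
  ultimately show "c < N" "coprime c N" by auto
qed

lemma T_props: assumes "(x, y) \<in> T" shows "x \<in> K" "x \<noteq> 0" "y \<notin> K"
proof -
  obtain a c where ac: "c \<in> totatives N" and xy: "x = \<gamma> ^ ((q+1)*a)" "y = \<gamma> ^ (c + (q+1)*a)"
    using assms by (auto simp: T_def P_def emb_def)
  show "x \<in> K" using xy gamma_qp1_inK by simp
  show "x \<noteq> 0" using xy by (simp add: gamma_nz)
  show "y \<notin> K" using xy gamma_notinK tot_lt(2)[OF ac] by simp
qed

lemma emb_inj: "inj_on emb P"
proof (rule inj_onI)
  fix u v assume u: "u \<in> P" and v: "v \<in> P" and e: "emb u = emb v"
  obtain a c where uu: "u = (a, c)" by force
  obtain a' c' where vv: "v = (a', c')" by force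
  have a: "a < q - 1" "a' < q - 1" using u v uu vv by (auto simp: P_def)
  have c: "c < N" "c' < N" using u v uu vv tot_lt by (auto simp: P_def)
  have e1: "\<gamma> ^ ((q+1)*a) = \<gamma> ^ ((q+1)*a')" and e2: "\<gamma> ^ (c + (q+1)*a) = \<gamma> ^ (c' + (q+1)*a')"
    using e uu vv by (auto simp: emb_def)
  have "(q+1)*a < (q+1)*(q-1)" by (rule mult_strict_left_mono) (use a in auto)
  moreover have "(q+1)*a' < (q+1)*(q-1)" by (rule mult_strict_left_mono) (use a in auto)
  ultimately have "(q+1)*a < N" "(q+1)*a' < N" unfolding N_eq by (simp_all only: mult.commute)
  moreover have "((q+1)*a) mod N = ((q+1)*a') mod N" using e1 gamma_eq_iff by blast
  ultimately have "(q+1)*a = (q+1)*a'" by simp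
  hence aa: "a = a'" by (rule mult_left_cancel[THEN iffD1, rotated]) simp
  have "\<gamma> ^ c * \<gamma> ^ ((q+1)*a) = \<gamma> ^ c' * \<gamma> ^ ((q+1)*a)" using e2 aa by (simp add: power_add)
  hence "\<gamma> ^ c = \<gamma> ^ c'" by (rule mult_right_cancel[THEN iffD1, OF gamma_pow_nz])
  hence "c = c'" using c by (simp add: gamma_eq_iff)
  thus "u = v" using uu vv aa by simp
qed

lemma finite_P: "finite P" by (simp add: P_def totatives_def)

lemma card_T: "card T = (q - 1) * totient N"
proof -
  have "card T = card P" unfolding T_def by (rule card_image[OF emb_inj])
  also have "\<dots> = card {..<q-1} * card (totatives N)" unfolding P_def by (rule card_cartesian_product)
  finally show ?thesis by (simp add: totient_def)
qed

lemma coprime_q_N: "coprime q N"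
proof (rule coprimeI)
  fix d assume d1: "d dvd q" and d2: "d dvd N"
  have "d dvd q ^ 2" using d1 by (simp add: power2_eq_square)
  moreover have "q ^ 2 = N + 1" using N_ge3 by (simp add: N_def)
  ultimately have "d dvd N + 1" by simp
  hence "d dvd 1" by (rule dvd_add_right_iff[THEN iffD1, OF d2])
  thus "is_unit d" by simp
qed

lemma qp1_q: "(q + 1) * a * q = N * a + (q+1) * a"
proof -
  have "q ^ 2 \<ge> 4" using q_ge2 power_mono[of 2 q 2] by simp
  hence e1: "N + (q+1) = q^2 + q" unfolding N_def by simp
  have e2: "(q+1)*q = q^2 + q" by (simp add: power2_eq_square algebra_simps)
  have "(q + 1) * a * q = ((q+1)*q) * a" by (simp add: algebra_simps)
  also have "\<dots> = (N + (q+1)) * a" by (simp only: e2 e1[symmetric])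
  finally show ?thesis by (simp add: algebra_simps)
qed

lemma T_frob: assumes "(x, y) \<in> T" shows "(x, frob y) \<in> T"
proof -
  obtain a c where ac: "a < q - 1" "c \<in> totatives N" and xy: "x = \<gamma> ^ ((q+1)*a)" "y = \<gamma> ^ (c + (q+1)*a)"
    using assms by (auto simp: T_def P_def emb_def)
  define c' where "c' = (q * c) mod N"
  have N0: "N > 0" using N_ge3 by simp
  have cop: "coprime c' N" using tot_lt(2)[OF ac(2)] coprime_q_N N0 by (simp add: c'_def)
  have "c' \<noteq> 0"
  proof
    assume "c' = 0" with cop have "N = 1" by simp
    thus False using N_ge3 by simp
  qed
  moreover have "c' \<le> N" using N0 by (simp add: c'_def less_imp_le)
  ultimately have c'T: "c' \<in> totatives N" using cop by (simp add: in_totatives_iff)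
  have "(c + (q+1)*a) * q = (q * c + (q+1)*a) + N * a" using qp1_q[of a] by (simp add: algebra_simps)
  hence "((c + (q+1)*a) * q) mod N = (q * c + (q+1)*a) mod N"
    by (simp only: mod_mult_self2)
  also have "\<dots> = (c' + (q+1)*a) mod N" unfolding c'_def by (simp only: mod_add_left_eq)
  finally have "((c + (q+1)*a) * q) mod N = (c' + (q+1)*a) mod N" .
  hence "frob y = \<gamma> ^ (c' + (q+1)*a)" unfolding xy frob_def
    by (simp only: power_mult[symmetric] gamma_eq_iff)
  thus ?thesis using ac c'T xy unfolding T_def P_def emb_def by force
qed

lemma fiber: assumes t: "(x, y) \<in> T"
  shows "{t' \<in> T. Code' t' = Code x y} = {(x, y), (x, frob y)}"
proof -
  note xy = T_props[OF t]
  have "Code x (frob y) = Code x y" by (simp add: Code_def hpol_frob)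
  moreover have "(x, frob y) \<in> T" using T_frob[OF t] .
  moreover have "t' \<in> {(x, y), (x, frob y)}" if "t' \<in> T" "Code' t' = Code x y" for t'
  proof -
    obtain x' y' where tt: "t' = (x', y')" by force
    note xy' = T_props[of x' y'] 
    have "hpol x' y' = hpol x y" using code_eq_hpol[of x' y' x y] xy xy' that tt by (simp add: Code'_def)
    hence "x = x' \<and> (y = y' \<or> y = frob y')" using hpol_eq_imp[of x' y' x y] xy xy' that tt by simp
    hence "x' = x \<and> (y' = y \<or> y' = frob y)" by auto
    thus ?thesis using tt by auto
  qed
  ultimately show ?thesis using t by (auto simp: Code'_def)
qed

lemma card_T_double: "card T = 2 * card (Code' ` T)"
proof -
  have fin: "finite T" unfolding T_def using finite_P by simp
  have "(\<Sum>t\<in>T. (1::nat)) = (\<Sum>C\<in>Code' ` T. \<Sum>t\<in>{x. x \<in> T \<and> Code' x = C}. 1)"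
    by (rule sum.image_gen[OF fin])
  hence "card T = (\<Sum>C\<in>Code' ` T. card {t \<in> T. Code' t = C})" by simp
  also have "\<dots> = (\<Sum>C\<in>Code' ` T. 2)"
  proof (rule sum.cong)
    fix C assume "C \<in> Code' ` T"
    then obtain x y where t: "(x, y) \<in> T" and C: "C = Code x y" by (auto simp: Code'_def)
    have "frob y \<noteq> y" using frob_ne T_props(3)[OF t] by simp
    thus "card {t \<in> T. Code' t = C} = 2" unfolding C fiber[OF t] by simp
  qed simp
  finally show ?thesis by simp
qed

lemma minpoly_T: assumes "(x, y) \<in> T"
  shows "minpoly_over K x * minpoly_over K y = hpol x y"
  using T_props[OF assms] by (simp add: minpoly_lin minpoly_quad hpol_def)

lemma S_eq:
  "{C. \<exists>e1 e2::int. gcd (int q - 1) (2 * e1 - e2) = 1 \<and> gcd (int q + 1) e2 = 1 \<and>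
       C = cyclic_code_check K N (minpoly_over K (\<gamma> powi (- ((int q + 1) * e1))) *
                                 minpoly_over K (\<gamma> powi (- e2))) \<and>
       K_dim_eq K C 3} = Code' ` T" (is "?S = _")
proof
  define Q where "Q = int q"
  have Qm: "int (q - 1) = Q - 1" using q_ge2 by (simp add: Q_def of_nat_diff)
  have hQ: "Q - 1 > 0" using q_ge2 by (simp add: Q_def)
  have iN: "int N = (Q - 1) * (Q + 1)" unfolding N_eq of_nat_mult Qm by (simp add: Q_def)
  have N0: "int N > 0" using N_ge3 by simp
  show "?S \<subseteq> Code' ` T"
  proof
    fix C assume "C \<in> ?S"
    then obtain e1 e2 :: int where g1': "gcd (int q - 1) (2 * e1 - e2) = 1" and g2': "gcd (int q + 1) e2 = 1"
      and C': "C = cyclic_code_check K N (minpoly_over K (\<gamma> powi (- ((int q + 1) * e1))) *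
                                 minpoly_over K (\<gamma> powi (- e2)))"
      by (elim CollectE exE conjE) (rule that, assumption+)
    have g1: "gcd (Q - 1) (2 * e1 - e2) = 1" using g1' by (simp add: Q_def)
    have g2: "gcd (Q + 1) e2 = 1" using g2' by (simp add: Q_def)
    have C: "C = cyclic_code_check K N (minpoly_over K (\<gamma> powi (- ((Q + 1) * e1))) *
                                 minpoly_over K (\<gamma> powi (- e2)))" using C' by (simp add: Q_def)
    define a where "a = nat ((-e1) mod (Q-1))"
    have ia: "int a = (-e1) mod (Q-1)" using hQ by (simp add: a_def)
    have a_lt: "a < q - 1"
    proof -
      have "int a < Q - 1" using ia hQ by simp
      thus ?thesis using Qm by linarith
    qed
    define s where "s = (-e1) div (Q-1)"
    have as: "int a = -e1 - (Q-1)*s" using ia div_mult_mod_eq[of "-e1" "Q-1"] by (simp add: s_def algebra_simps)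
    define X where "X = -e2 - (Q+1)*int a"
    define c where "c = nat (X mod int N)"
    have ic: "int c = X mod int N" using N0 by (simp add: c_def)
    define t where "t = X div int N"
    have Xt: "int c = X - int N * t" using ic div_mult_mod_eq[of X "int N"] by (simp add: t_def algebra_simps)
    have c_lt: "c < N" using ic N0
      by (metis of_nat_less_iff pos_mod_bound)
    have c1: "int c = (e1 + (Q+1)*s - (Q+1)*t) * (Q-1) + (2*e1 - e2)"
      unfolding Xt X_def iN as by (simp add: algebra_simps)
    have c2: "int c = (- int a - (Q-1)*t) * (Q+1) + (- e2)"
      unfolding Xt X_def iN by (simp add: algebra_simps)
    have "gcd (Q-1) (int c) = 1" unfolding c1 gcd_add_mult using g1 .
    moreover have "gcd (Q+1) (int c) = 1" unfolding c2 gcd_add_mult using g2 by simp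
    ultimately have "coprime (int c) ((Q-1)*(Q+1))"
      by (simp add: coprime_iff_gcd_eq_1[symmetric] coprime_commute)
    hence copc: "coprime c N" using iN by (metis coprime_int_iff)
    have "c \<noteq> 0"
    proof
      assume "c = 0" with copc have "N = 1" by simp
      thus False using N_ge3 by simp
    qed
    hence cT: "c \<in> totatives N" using copc c_lt by (simp add: in_totatives_iff)
    have p1: "\<gamma> powi (- ((Q + 1) * e1)) = \<gamma> ^ ((q+1)*a)"
    proof (rule gamma_powi)
      have as': "-e1 - int a = (Q-1)*s" using as by simp
      have "- ((Q + 1) * e1) - int ((q + 1) * a) = (Q+1) * (-e1 - int a)" by (simp add: Q_def algebra_simps)
      also have "\<dots> = int N * s" unfolding as' iN by (simp add: algebra_simps)
      finally have "- ((Q + 1) * e1) - int ((q + 1) * a) = int N * s" .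
      thus "int N dvd - ((Q + 1) * e1) - int ((q + 1) * a)" by simp
    qed
    have p2: "\<gamma> powi (- e2) = \<gamma> ^ (c + (q+1)*a)"
    proof (rule gamma_powi)
      have "- e2 - int (c + (q+1)*a) = int N * t"
        using Xt by (simp add: X_def Q_def algebra_simps)
      thus "int N dvd - e2 - int (c + (q+1)*a)" by simp
    qed
    have tT: "(\<gamma> ^ ((q+1)*a), \<gamma> ^ (c + (q+1)*a)) \<in> T"
      unfolding T_def P_def emb_def using a_lt cT by force
    have "C = Code' (\<gamma> ^ ((q+1)*a), \<gamma> ^ (c + (q+1)*a))"
      unfolding C p1 p2 minpoly_T[OF tT] by (simp add: Code'_def Code_def)
    thus "C \<in> Code' ` T" using tT by blast
  qed
  show "Code' ` T \<subseteq> ?S"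
  proof
    fix C assume "C \<in> Code' ` T"
    then obtain a c where ac: "a < q - 1" "c \<in> totatives N"
      and C: "C = Code (\<gamma> ^ ((q+1)*a)) (\<gamma> ^ (c + (q+1)*a))"
      by (auto simp: T_def P_def emb_def Code'_def)
    have tT: "(\<gamma> ^ ((q+1)*a), \<gamma> ^ (c + (q+1)*a)) \<in> T"
      unfolding T_def P_def emb_def using ac by force
    define e1 :: int where "e1 = - int a"
    define e2 :: int where "e2 = - (int c + (Q+1) * int a)"
    have copc: "coprime c N" using tot_lt(2)[OF ac(2)] .
    hence "coprime c ((q-1)*(q+1))" by (simp only: N_eq)
    hence cop1: "coprime c (q-1)" and cop2: "coprime c (q+1)" by (simp_all only: coprime_mult_right_iff)
    have "gcd (Q - 1) (2 * e1 - e2) = gcd (Q-1) (int a * (Q-1) + int c)"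
      by (simp add: e1_def e2_def algebra_simps)
    also have "\<dots> = gcd (int (q-1)) (int c)" by (simp only: gcd_add_mult Qm)
    also have "\<dots> = 1" using cop1 by (simp add: coprime_commute coprime_iff_gcd_eq_1[symmetric])
    finally have g1: "gcd (Q - 1) (2 * e1 - e2) = 1" .
    have e2': "e2 = - (int a * (Q+1) + int c)" by (simp add: e2_def algebra_simps)
    have gq: "gcd (q+1) c = 1" using cop2 by (simp add: coprime_commute[of c] coprime_iff_gcd_eq_1[symmetric])
    have "gcd (Q + 1) e2 = gcd (Q+1) (int a * (Q+1) + int c)"
      by (simp only: e2' gcd_neg2)
    also have "\<dots> = gcd (int (q+1)) (int c)" by (simp only: gcd_add_mult) (simp add: Q_def add.commute)
    also have "\<dots> = int (gcd (q+1) c)" by (rule gcd_int_int_eq)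
    also have "\<dots> = 1" using gq by simp
    finally have g2: "gcd (Q + 1) e2 = 1" .
    have p1: "\<gamma> powi (- ((Q + 1) * e1)) = \<gamma> ^ ((q+1)*a)"
      by (rule gamma_powi) (simp add: e1_def Q_def algebra_simps)
    have p2: "\<gamma> powi (- e2) = \<gamma> ^ (c + (q+1)*a)"
      by (rule gamma_powi) (simp add: e2_def Q_def algebra_simps)
    have Ceq: "C = cyclic_code_check K N (minpoly_over K (\<gamma> powi (- ((Q + 1) * e1))) *
                                 minpoly_over K (\<gamma> powi (- e2)))"
      unfolding p1 p2 minpoly_T[OF tT] C by (simp add: Code_def)
    have "K_dim_eq K C 3" unfolding C using T_props[OF tT] by (intro code_dim)
    thus "C \<in> ?S" using g1 g2 Ceq unfolding Q_def mem_Collect_eq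
      by (rule_tac exI[of _ e1], rule_tac exI[of _ e2]) (intro conjI; assumption)
  qed
qed

lemma main_count:
  "real (card {C. \<exists>e1 e2::int. gcd (int q - 1) (2 * e1 - e2) = 1 \<and> gcd (int q + 1) e2 = 1 \<and>
       C = cyclic_code_check K N (minpoly_over K (\<gamma> powi (- ((int q + 1) * e1))) *
                                 minpoly_over K (\<gamma> powi (- e2))) \<and>
       K_dim_eq K C 3}) = real (totient N * (q - 1)) / 2"
proof -
  have e: "2 * card (Code' ` T) = totient N * (q - 1)" using card_T_double card_T by (metis mult.commute)
  have "real (2 * card (Code' ` T)) = real (totient N * (q - 1))" using e by (rule arg_cong)
  hence "2 * real (card (Code' ` T)) = real (totient N * (q - 1))" by (simp only: of_nat_mult of_nat_numeral)
  thus ?thesis unfolding S_eq by simp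
qed

end

theorem theorem4:
  fixes q :: nat and \<gamma> :: "'a::{finite,field}"
  assumes q_pp: "\<exists>p k. prime p \<and> k > 0 \<and> q = p ^ k"
    and card: "CARD('a) = q ^ 2"
    and prim: "primitive_element \<gamma>"
  defines "Fq \<equiv> subfield_Fq q :: 'a set"
    and "n \<equiv> q ^ 2 - 1"
    and "h \<equiv> (\<lambda>a::int. minpoly_over (subfield_Fq q) (\<gamma> powi (- a)))"
  shows "real (card {C. \<exists>e1 e2::int.
              gcd (int q - 1) (2 * e1 - e2) = 1 \<and> gcd (int q + 1) e2 = 1 \<and>
              C = cyclic_code_check Fq n (h ((int q + 1) * e1) * h e2) \<and>
              K_dim_eq Fq C 3})
         = real (totient (q ^ 2 - 1) * (q - 1)) / 2"
proof -
  obtain p k where pk: "prime p" "k > 0" "q = p ^ k" using q_pp by blast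
  interpret ffsetting q \<gamma> p k using pk card prim by unfold_locales auto
  show ?thesis unfolding Fq_def n_def h_def using main_count unfolding N_def .
qed

end
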